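(* Let $\Gamma$ be a distance-regular graph with valency $k\geq 3$, diameter $D\geq 3$, intersection numbers $a_i,b_i,c_i$, and distinct eigenvalues $k=\theta_0>\theta_1>\cdots>\theta_D$. Then: (i) $\theta_D < \frac{a_1-\sqrt{a_1^2+4k}}{2}$; (ii) $\theta_1 \geq \min\left\{\frac{a_1+\sqrt{a_1^2+4k}}{2},\, a_3\right\}$; (iii) if $D\geq 4$, then $\theta_1\geq \frac{a_1+\sqrt{a_1^2+4k}}{2}$.
   Context: All graphs are finite, simple, undirected and connected. For vertices $x,y$, $d(x,y)$ is the graph distance, $D=\max d(x,y)$ is the diameter, and $\Gamma_i(x)$ is the set of vertices at distance exactly $i$ from $x$. $\Gamma$ is distance-regular if there are integers $b_i,c_i$ such that for all $x,y$ with $d(x,y)=i$, $y$ has exactly $c_i$ neighbours in $\Gamma_{i-1}(x)$ and exactly $b_i$ neighbours in $\Gamma_{i+1}(x)$; then $\Gamma$ is regular of valency $k=b_0$, and $a_i:=k-b_i-c_i$ (the number of neighbours of $y$ in $\Gamma_i(x)$). The eigenvalues of $\Gamma$ are those of its adjacency matrix; a distance-regular graph of diameter $D$ has exactly $D+1$ distinct eigenvalues. *)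

theory Defs
  imports Complex_Main
begin

definition simple_graph :: "'a set \<Rightarrow> ('a \<Rightarrow> 'a \<Rightarrow> bool) \<Rightarrow> bool" where
  "simple_graph V E \<longleftrightarrow> finite V \<and> V \<noteq> {} \<and>
     (\<forall>x y. E x y \<longrightarrow> x \<in> V \<and> y \<in> V) \<and>
     (\<forall>x y. E x y \<longrightarrow> E y x) \<and> (\<forall>x. \<not> E x x)"

fun walk :: "'a set \<Rightarrow> ('a \<Rightarrow> 'a \<Rightarrow> bool) \<Rightarrow> nat \<Rightarrow> 'a \<Rightarrow> 'a \<Rightarrow> bool" where
  "walk V E 0 x y = (x \<in> V \<and> x = y)"
| "walk V E (Suc n) x y = (\<exists>z\<in>V. E x z \<and> walk V E n z y)"

definition connected_graph :: "'a set \<Rightarrow> ('a \<Rightarrow> 'a \<Rightarrow> bool) \<Rightarrow> bool" where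
  "connected_graph V E \<longleftrightarrow> (\<forall>x\<in>V. \<forall>y\<in>V. \<exists>n. walk V E n x y)"

definition gdist :: "'a set \<Rightarrow> ('a \<Rightarrow> 'a \<Rightarrow> bool) \<Rightarrow> 'a \<Rightarrow> 'a \<Rightarrow> nat" where
  "gdist V E x y = (LEAST n. walk V E n x y)"

definition diameter :: "'a set \<Rightarrow> ('a \<Rightarrow> 'a \<Rightarrow> bool) \<Rightarrow> nat" where
  "diameter V E = Max {gdist V E x y | x y. x \<in> V \<and> y \<in> V}"

definition sphere :: "'a set \<Rightarrow> ('a \<Rightarrow> 'a \<Rightarrow> bool) \<Rightarrow> nat \<Rightarrow> 'a \<Rightarrow> 'a set" where
  "sphere V E i x = {y \<in> V. gdist V E x y = i}"

definition nbrs :: "'a set \<Rightarrow> ('a \<Rightarrow> 'a \<Rightarrow> bool) \<Rightarrow> 'a \<Rightarrow> 'a set" where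
  "nbrs V E y = {z \<in> V. E y z}"

text \<open>Distance-regular with intersection arrays b, c (for i = 0, c 0 is forced to be 0).\<close>
definition distance_regular_with ::
  "'a set \<Rightarrow> ('a \<Rightarrow> 'a \<Rightarrow> bool) \<Rightarrow> (nat \<Rightarrow> nat) \<Rightarrow> (nat \<Rightarrow> nat) \<Rightarrow> bool" where
  "distance_regular_with V E b c \<longleftrightarrow>
     simple_graph V E \<and> connected_graph V E \<and>
     (\<forall>x\<in>V. \<forall>y\<in>V. let i = gdist V E x y in
        card (nbrs V E y \<inter> (if i = 0 then {} else sphere V E (i - 1) x)) = c i \<and>
        card (nbrs V E y \<inter> sphere V E (i + 1) x) = b i)"

definition adj_eigenvalue :: "'a set \<Rightarrow> ('a \<Rightarrow> 'a \<Rightarrow> bool) \<Rightarrow> real \<Rightarrow> bool" where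
  "adj_eigenvalue V E \<theta> \<longleftrightarrow>
     (\<exists>f :: 'a \<Rightarrow> real. (\<exists>v\<in>V. f v \<noteq> 0) \<and>
        (\<forall>x\<in>V. (\<Sum>y\<in>V. if E x y then f y else 0) = \<theta> * f x))"

end

theory Submission
  imports Defs "HOL-Analysis.Analysis"
begin

hide_const (open) Elementary_Metric_Spaces.diameter Elementary_Metric_Spaces.sphere


locale drgl =
  fixes V :: "'a set" and E :: "'a \<Rightarrow> 'a \<Rightarrow> bool" and b c :: "nat \<Rightarrow> nat"
  assumes drg: "distance_regular_with V E b c"
begin

lemma sg: "simple_graph V E" using drg unfolding Defs.distance_regular_with_def by blast
lemma finV: "finite V" using sg unfolding Defs.simple_graph_def by blast
lemma Vne: "V \<noteq> {}" using sg unfolding Defs.simple_graph_def by blast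
lemma EV: "E x y \<Longrightarrow> x \<in> V \<and> y \<in> V" using sg unfolding Defs.simple_graph_def by blast
lemma Esym: "E x y \<Longrightarrow> E y x" using sg unfolding Defs.simple_graph_def by blast
lemma Eirr: "\<not> E x x" using sg unfolding Defs.simple_graph_def by blast
lemma conn: "x \<in> V \<Longrightarrow> y \<in> V \<Longrightarrow> \<exists>n. walk V E n x y"
  using drg unfolding Defs.distance_regular_with_def Defs.connected_graph_def by blast

lemma walkV: "walk V E n x y \<Longrightarrow> x \<in> V \<and> y \<in> V"
  by (induction n arbitrary: x) (auto dest: EV)

lemma walk_snoc: "walk V E (Suc n) x y \<longleftrightarrow> (\<exists>z\<in>V. walk V E n x z \<and> E z y)"
proof (induction n arbitrary: x)
  case 0
  then show ?case using EV by auto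
next
  case (Suc n)
  have "walk V E (Suc (Suc n)) x y \<longleftrightarrow> (\<exists>w\<in>V. E x w \<and> walk V E (Suc n) w y)" by simp
  also have "\<dots> \<longleftrightarrow> (\<exists>w\<in>V. E x w \<and> (\<exists>z\<in>V. walk V E n w z \<and> E z y))" using Suc by simp
  also have "\<dots> \<longleftrightarrow> (\<exists>z\<in>V. walk V E (Suc n) x z \<and> E z y)" by auto
  finally show ?case .
qed

lemma walk_append: "walk V E m x y \<Longrightarrow> walk V E n y z \<Longrightarrow> walk V E (m + n) x z"
  by (induction m arbitrary: x) auto

lemma walk_sym: "walk V E n x y \<Longrightarrow> walk V E n y x"
proof (induction n arbitrary: x)
  case 0 then show ?case by auto
next
  case (Suc n)
  then obtain z where z: "z \<in> V" "E x z" "walk V E n z y" by auto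
  then have "walk V E n y z" using Suc by blast
  then show ?case using walk_snoc z EV by (meson Esym)
qed

lemma gdist_walk: "x \<in> V \<Longrightarrow> y \<in> V \<Longrightarrow> walk V E (gdist V E x y) x y"
  unfolding Defs.gdist_def using conn by (meson LeastI_ex)

lemma gdist_le: "walk V E n x y \<Longrightarrow> gdist V E x y \<le> n"
  unfolding Defs.gdist_def by (simp add: Least_le)

lemma gdist_sym: "x \<in> V \<Longrightarrow> y \<in> V \<Longrightarrow> gdist V E x y = gdist V E y x"
  by (meson antisym gdist_le gdist_walk walk_sym)

lemma gdist_tri: "x \<in> V \<Longrightarrow> y \<in> V \<Longrightarrow> z \<in> V \<Longrightarrow> gdist V E x z \<le> gdist V E x y + gdist V E y z"
  by (meson gdist_le gdist_walk walk_append)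

lemma gdist_0: "x \<in> V \<Longrightarrow> y \<in> V \<Longrightarrow> gdist V E x y = 0 \<longleftrightarrow> x = y"
proof
  assume "x \<in> V" "y \<in> V" "gdist V E x y = 0"
  then show "x = y" using gdist_walk[of x y] by simp
next
  assume "x \<in> V" "x = y"
  then show "gdist V E x y = 0" using gdist_le[of 0 x y] by simp
qed

lemma gdist_edge: "E x y \<Longrightarrow> gdist V E x y = 1"
proof -
  assume e: "E x y"
  have "walk V E 1 x y" using e EV by auto
  then have "gdist V E x y \<le> 1" by (rule gdist_le)
  moreover have "gdist V E x y \<noteq> 0" using gdist_0 EV e Eirr by metis
  ultimately show ?thesis by simp
qed

lemma gdist_nb: assumes "x \<in> V" "E v z"
  shows "gdist V E x z \<le> gdist V E x v + 1" "gdist V E x v \<le> gdist V E x z + 1"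
proof -
  show "gdist V E x z \<le> gdist V E x v + 1"
    using gdist_tri[of x v z] gdist_edge[OF assms(2)] EV assms by simp
  show "gdist V E x v \<le> gdist V E x z + 1"
    using gdist_tri[of x z v] gdist_edge[OF Esym[OF assms(2)]] EV assms by simp
qed

lemma gdist_pred: assumes "x \<in> V" "y \<in> V" "gdist V E x y = Suc m"
  shows "\<exists>z\<in>V. E z y \<and> gdist V E x z = m"
proof -
  have "walk V E (Suc m) x y" using gdist_walk assms by metis
  then obtain z where z: "z \<in> V" "walk V E m x z" "E z y" using walk_snoc by blast
  have "gdist V E x z \<le> m" using z gdist_le by blast
  moreover have "Suc m \<le> gdist V E x z + 1" using gdist_nb[OF assms(1) z(3)] assms by simp
  ultimately show ?thesis using z by auto
qed

lemma gdist_exists: assumes "x \<in> V" "y \<in> V" "j \<le> gdist V E x y"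
  shows "\<exists>z\<in>V. gdist V E x z = j"
proof -
  have "\<And>y. y \<in> V \<Longrightarrow> gdist V E x y = d \<Longrightarrow> j \<le> d \<Longrightarrow> \<exists>z\<in>V. gdist V E x z = j" for d
  proof (induction d)
    case 0 then show ?case by auto
  next
    case (Suc d)
    show ?case
    proof (cases "j = Suc d")
      case True then show ?thesis using Suc by blast
    next
      case False
      then obtain z where "z \<in> V" "gdist V E x z = d" using gdist_pred[OF assms(1)] Suc.prems by blast
      then show ?thesis using Suc False by auto
    qed
  qed
  then show ?thesis using assms by blast
qed

lemma diam_attained: "\<exists>x\<in>V. \<exists>y\<in>V. gdist V E x y = diameter V E"
proof -
  let ?S = "{gdist V E x y | x y. x \<in> V \<and> y \<in> V}"
  have "?S = (\<lambda>(x,y). gdist V E x y) ` (V \<times> V)" by auto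
  then have "finite ?S" using finV by simp
  moreover have "?S \<noteq> {}" using Vne by auto
  ultimately have "Max ?S \<in> ?S" by (rule Max_in)
  then show ?thesis unfolding Defs.diameter_def by force
qed

lemma exists_dist: assumes "j \<le> diameter V E" shows "\<exists>x\<in>V. \<exists>y\<in>V. gdist V E x y = j"
  using diam_attained gdist_exists assms by metis

definition k where "k = b 0"

lemma nbrs_sub: "nbrs V E v \<subseteq> V" unfolding Defs.nbrs_def by auto
lemma fin_nbrs: "finite (nbrs V E v)" using finV nbrs_sub finite_subset by blast

lemma drg_cond: "x \<in> V \<Longrightarrow> y \<in> V \<Longrightarrow> gdist V E x y = i \<Longrightarrow>
   card (nbrs V E y \<inter> (if i = 0 then {} else sphere V E (i - 1) x)) = c i \<and>
   card (nbrs V E y \<inter> sphere V E (i + 1) x) = b i"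
  using drg unfolding Defs.distance_regular_with_def Let_def by metis

lemma card_nbrs: assumes "v \<in> V" shows "card (nbrs V E v) = k"
proof -
  have "nbrs V E v \<inter> sphere V E 1 v = nbrs V E v"
    unfolding Defs.nbrs_def Defs.sphere_def using gdist_edge by auto
  moreover have "gdist V E v v = 0" using gdist_0 assms by simp
  ultimately show ?thesis using drg_cond[OF assms assms] unfolding k_def by auto
qed

lemma card_a: assumes "x \<in> V" "v \<in> V" "gdist V E x v = i"
  shows "real (card (nbrs V E v \<inter> sphere V E i x)) = real k - real (b i) - real (c i)"
proof -
  define A1 where "A1 = nbrs V E v \<inter> (if i = 0 then {} else sphere V E (i - 1) x)"
  define A2 where "A2 = nbrs V E v \<inter> sphere V E i x"
  define A3 where "A3 = nbrs V E v \<inter> sphere V E (i + 1) x"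
  have un: "nbrs V E v = A1 \<union> A2 \<union> A3"
  proof
    show "nbrs V E v \<subseteq> A1 \<union> A2 \<union> A3"
    proof
      fix z assume z: "z \<in> nbrs V E v"
      then have e: "E v z" "z \<in> V" unfolding Defs.nbrs_def by auto
      have "gdist V E x z \<le> i + 1" "i \<le> gdist V E x z + 1" using gdist_nb[OF assms(1) e(1)] assms by auto
      then consider "gdist V E x z = i + 1" | "gdist V E x z = i" | "i > 0 \<and> gdist V E x z = i - 1" by linarith
      then show "z \<in> A1 \<union> A2 \<union> A3" unfolding A1_def A2_def A3_def Defs.sphere_def using z e by cases auto
    qed
  qed (auto simp: A1_def A2_def A3_def)
  have d12: "A1 \<inter> A2 = {}" "A1 \<inter> A3 = {}" "A2 \<inter> A3 = {}"
    unfolding A1_def A2_def A3_def Defs.sphere_def by auto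
  have f: "finite A1" "finite A2" "finite A3" unfolding A1_def A2_def A3_def using fin_nbrs by auto
  have "card (nbrs V E v) = card A1 + card A2 + card A3"
    using un d12 f by (simp add: card_Un_disjoint Int_Un_distrib2)
  moreover have "card A1 = c i" "card A3 = b i" using drg_cond[OF assms] unfolding A1_def A3_def by auto
  ultimately show ?thesis using card_nbrs[OF assms(2)] unfolding A2_def by simp
qed

end


context drgl
begin

definition Ad :: "('a \<Rightarrow> real) \<Rightarrow> 'a \<Rightarrow> real" where
  "Ad f x = (\<Sum>y\<in>V. if E x y then f y else 0)"
definition ip :: "('a \<Rightarrow> real) \<Rightarrow> ('a \<Rightarrow> real) \<Rightarrow> real" where
  "ip f g = (\<Sum>v\<in>V. f v * g v)"

lemma ip_sym: "ip f g = ip g f" unfolding ip_def by (simp add: mult.commute)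

lemma ip_Ad_sym: "ip f (Ad g) = ip (Ad f) g"
proof -
  have "ip f (Ad g) = (\<Sum>v\<in>V. \<Sum>y\<in>V. if E v y then f v * g y else 0)"
    unfolding ip_def Ad_def sum_distrib_left by (intro sum.cong refl) auto
  also have "\<dots> = (\<Sum>y\<in>V. \<Sum>v\<in>V. if E v y then f v * g y else 0)" by (rule sum.swap)
  also have "\<dots> = (\<Sum>y\<in>V. \<Sum>v\<in>V. if E y v then f v * g y else 0)"
    by (intro sum.cong refl) (metis Esym)
  also have "\<dots> = ip (Ad f) g"
    unfolding ip_def Ad_def sum_distrib_right by (intro sum.cong refl) auto
  finally show ?thesis .
qed

lemma Ad_add: "Ad (\<lambda>v. f v + t * g v) x = Ad f x + t * Ad g x"
  unfolding Ad_def sum_distrib_left sum.distrib[symmetric] by (intro sum.cong refl) auto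

lemma Q_add: "ip (\<lambda>v. f v + t * g v) (Ad (\<lambda>v. f v + t * g v))
   = ip f (Ad f) + t * (ip f (Ad g) + ip g (Ad f)) + t^2 * ip g (Ad g)"
  unfolding Ad_add unfolding ip_def
  by (simp add: sum.distrib sum_distrib_left algebra_simps power2_eq_square)

lemma N_add: "ip (\<lambda>v. f v + t * g v) (\<lambda>v. f v + t * g v)
   = ip f f + t * (2 * ip f g) + t^2 * ip g g"
  unfolding ip_def
  by (simp add: sum.distrib sum_distrib_left algebra_simps power2_eq_square)

lemma sum_Ad: "sum (Ad f) V = real k * sum f V"
proof -
  have "sum (Ad f) V = (\<Sum>y\<in>V. \<Sum>x\<in>V. if E x y then f y else 0)"
    unfolding Ad_def by (rule sum.swap)
  also have "\<dots> = (\<Sum>y\<in>V. real k * f y)"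
  proof (intro sum.cong refl)
    fix y assume y: "y \<in> V"
    have "(\<Sum>x\<in>V. if E x y then f y else 0) = (\<Sum>x\<in>{x\<in>V. E x y}. f y)"
      using sum.inter_filter[OF finV, of "\<lambda>_. f y" "\<lambda>x. E x y"] by simp
    also have "{x\<in>V. E x y} = nbrs V E y" unfolding Defs.nbrs_def using Esym by blast
    finally show "(\<Sum>x\<in>V. if E x y then f y else 0) = real k * f y"
      using card_nbrs[OF y] by simp
  qed
  finally show ?thesis by (simp add: sum_distrib_left)
qed

lemma ip_nonneg: "ip f f \<ge> 0" unfolding ip_def by (simp add: sum_nonneg)

lemma ip_zero: "ip f f = 0 \<Longrightarrow> v \<in> V \<Longrightarrow> f v = 0"
  unfolding ip_def using finV by (simp add: sum_nonneg_eq_0_iff)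

lemma quad0: fixes a q :: real assumes "\<And>t. 2 * t * a + t^2 * q \<le> 0" shows "a = 0"
proof -
  define t where "t = a / (\<bar>q\<bar> + 1)"
  have pos: "\<bar>q\<bar> + 1 > 0" by simp
  have "2 * t * a + t^2 * q \<le> 0" by (rule assms)
  then have "(2 * t * a + t^2 * q) * (\<bar>q\<bar> + 1)^2 \<le> 0"
    by (simp add: mult_nonpos_nonneg)
  moreover have "(2 * t * a + t^2 * q) * (\<bar>q\<bar> + 1)^2 = a^2 * (2 * (\<bar>q\<bar> + 1) + q)"
  proof -
    have td: "t * (\<bar>q\<bar> + 1) = a" unfolding t_def using pos by simp
    have "(2 * t * a + t^2 * q) * (\<bar>q\<bar> + 1)^2 = 2 * a * (t * (\<bar>q\<bar> + 1)) * (\<bar>q\<bar> + 1) + (t * (\<bar>q\<bar> + 1))^2 * q"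
      by (simp add: algebra_simps power2_eq_square)
    also have "\<dots> = a^2 * (2 * (\<bar>q\<bar> + 1) + q)" unfolding td by (simp add: algebra_simps power2_eq_square)
    finally show ?thesis .
  qed
  ultimately have "a^2 * (2 * (\<bar>q\<bar> + 1) + q) \<le> 0" by simp
  moreover have "2 * (\<bar>q\<bar> + 1) + q > 0" by (cases "q \<ge> 0") auto
  ultimately have "a^2 \<le> 0" by (simp add: mult_le_0_iff)
  then show ?thesis by simp
qed

lemma aux_alg: fixes \<sigma> \<mu> n t x q y m :: real
  shows "\<sigma>*(\<mu>*n + t*(x+x) + t^2*q) - \<sigma>*\<mu>*(n + t*(2*y) + t^2*m) = 2*t*(\<sigma>*(x - \<mu>*y)) + t^2*(\<sigma>*(q - \<mu>*m))"
  by (simp add: algebra_simps)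

lemma stationary:
  assumes sig: "\<sigma> \<noteq> 0"
    and ineq: "\<And>h. (z \<longrightarrow> sum h V = 0) \<Longrightarrow> \<sigma> * ip h (Ad h) \<le> \<sigma> * \<mu> * ip h h"
    and Pf: "z \<longrightarrow> sum f V = 0"
    and eq: "ip f (Ad f) = \<mu> * ip f f"
  shows "\<forall>v\<in>V. Ad f v = \<mu> * f v"
proof -
  define g where "g = (\<lambda>v. Ad f v - \<mu> * f v)"
  have sg: "sum g V = sum (Ad f) V - \<mu> * sum f V" unfolding g_def by (simp add: sum_subtractf sum_distrib_left)
  have Pg: "z \<longrightarrow> sum g V = 0" using Pf unfolding sg sum_Ad by simp
  have L1: "ip (Ad f) g - \<mu> * ip f g = (\<Sum>v\<in>V. (Ad f v - \<mu> * f v) * g v)"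
    unfolding ip_def sum_distrib_left sum_subtractf[symmetric] by (intro sum.cong refl) (simp add: algebra_simps)
  have L: "ip f (Ad g) - \<mu> * ip f g = ip g g"
  proof -
    have "ip f (Ad g) = ip (Ad f) g" by (rule ip_Ad_sym)
    moreover have "(\<Sum>v\<in>V. (Ad f v - \<mu> * f v) * g v) = ip g g" by (simp only: ip_def g_def)
    ultimately show ?thesis using L1 by simp
  qed
  have "2 * t * (\<sigma> * ip g g) + t^2 * (\<sigma> * (ip g (Ad g) - \<mu> * ip g g)) \<le> 0" for t
  proof -
    have sfg: "sum (\<lambda>v. f v + t * g v) V = sum f V + t * sum g V" by (simp add: sum.distrib sum_distrib_left)
    have "z \<longrightarrow> sum (\<lambda>v. f v + t * g v) V = 0" using Pf Pg unfolding sfg by simp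
    then have "\<sigma> * ip (\<lambda>v. f v + t * g v) (Ad (\<lambda>v. f v + t * g v)) \<le> \<sigma> * \<mu> * ip (\<lambda>v. f v + t * g v) (\<lambda>v. f v + t * g v)"
      by (rule ineq[of "\<lambda>v. f v + t * g v"])
    then have "\<sigma> * (ip f (Ad f) + t * (ip f (Ad g) + ip g (Ad f)) + t^2 * ip g (Ad g)) \<le> \<sigma> * \<mu> * (ip f f + t * (2 * ip f g) + t^2 * ip g g)"
      unfolding Q_add N_add .
    moreover have "ip g (Ad f) = ip f (Ad g)" using ip_Ad_sym ip_sym by metis
    ultimately have "\<sigma> * (\<mu> * ip f f + t * (ip f (Ad g) + ip f (Ad g)) + t^2 * ip g (Ad g)) - \<sigma> * \<mu> * (ip f f + t * (2 * ip f g) + t^2 * ip g g) \<le> 0"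
      using eq by simp
    then show ?thesis unfolding aux_alg L .
  qed
  then have "\<sigma> * ip g g = 0" by (rule quad0)
  then have gg: "ip g g = 0" using sig by simp
  show ?thesis
  proof
    fix v assume v: "v \<in> V"
    have "g v = 0" by (rule ip_zero[OF gg v])
    then have "Ad f v - \<mu> * f v = 0" unfolding g_def .
    then show "Ad f v = \<mu> * f v" by simp
  qed
qed

lemma exists_max:
  fixes f0 :: "'a \<Rightarrow> real"
  assumes f0: "\<exists>v\<in>V. f0 v \<noteq> 0" "z \<longrightarrow> sum f0 V = 0"
  shows "\<exists>f. ip f f = 1 \<and> (z \<longrightarrow> sum f V = 0) \<and>
     (\<forall>h. (\<forall>v. v \<notin> V \<longrightarrow> h v = 0) \<and> ip h h = 1 \<and> (z \<longrightarrow> sum h V = 0) \<longrightarrow> \<sigma> * ip h (Ad h) \<le> \<sigma> * ip f (Ad f))"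
proof -
  define S where "S = (\<lambda>v::'a. if v \<in> V then {-1..1::real} else {0})"
  define K where "K = {h. (\<forall>v. v \<notin> V \<longrightarrow> h v = 0) \<and> ip h h = 1 \<and> (z \<longrightarrow> sum h V = 0)}"
  have cont: "continuous_on UNIV (\<lambda>h::'a\<Rightarrow>real. h v)" for v by simp
  have Kc: "K = PiE UNIV S \<inter> ({h. ip h h = 1} \<inter> {h. z \<longrightarrow> sum h V = 0})"
  proof
    show "K \<subseteq> PiE UNIV S \<inter> ({h. ip h h = 1} \<inter> {h. z \<longrightarrow> sum h V = 0})"
    proof
      fix h assume h: "h \<in> K"
      have "h v \<in> S v" for v
      proof (cases "v \<in> V")
        case True
        have "(h v)^2 \<le> ip h h" unfolding ip_def power2_eq_square
          using finV True by (intro member_le_sum) auto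
        then have "\<bar>h v\<bar> \<le> 1" using h unfolding K_def by (simp add: abs_square_le_1[symmetric])
        then show ?thesis using True unfolding S_def by auto
      next
        case False then show ?thesis using h unfolding K_def S_def by auto
      qed
      then show "h \<in> PiE UNIV S \<inter> ({h. ip h h = 1} \<inter> {h. z \<longrightarrow> sum h V = 0})"
        using h unfolding K_def by auto
    qed
  next
    show "PiE UNIV S \<inter> ({h. ip h h = 1} \<inter> {h. z \<longrightarrow> sum h V = 0}) \<subseteq> K"
      unfolding K_def S_def by (auto simp: PiE_iff split: if_splits)
  qed
  have c1: "compact (PiE UNIV S)"
  proof -
    have "compactin (product_topology (\<lambda>i. euclidean) UNIV) (PiE UNIV S)"
      unfolding compactin_PiE by (auto simp: S_def)
    then show ?thesis unfolding euclidean_product_topology by simp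
  qed
  have cip: "continuous_on UNIV (\<lambda>h. ip h h)" unfolding ip_def
    by (intro continuous_intros cont)
  have csum: "continuous_on UNIV (\<lambda>h::'a\<Rightarrow>real. sum h V)"
  proof -
    have "continuous_on UNIV (\<lambda>h::'a\<Rightarrow>real. \<Sum>v\<in>V. h v * 1)" by (intro continuous_intros cont)
    then show ?thesis by simp
  qed
  have cl1: "closed {h. ip h h = 1}"
    using closed_Collect_eq[OF cip continuous_on_const] by simp
  have cl2: "closed {h::'a\<Rightarrow>real. z \<longrightarrow> sum h V = 0}"
  proof (cases z)
    case True
    then show ?thesis using closed_Collect_eq[OF csum continuous_on_const] by simp
  qed simp
  have compK: "compact K" unfolding Kc using c1 cl1 cl2 by (intro compact_Int_closed closed_Int)
  have neK: "K \<noteq> {}"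
  proof -
    define n where "n = ip f0 f0"
    have "n \<noteq> 0"
    proof
      assume "n = 0"
      then have "\<forall>v\<in>V. f0 v = 0" using ip_zero[of f0] unfolding n_def by blast
      then show False using f0(1) by blast
    qed
    then have npos: "n > 0" using ip_nonneg[of f0] n_def by simp
    define f1 where "f1 = (\<lambda>v. if v \<in> V then f0 v / sqrt n else 0)"
    have "ip f1 f1 = (\<Sum>v\<in>V. f0 v * f0 v / n)" unfolding ip_def f1_def
      using npos by (intro sum.cong refl) (simp add: power_divide power2_eq_square[symmetric])
    also have "\<dots> = 1" using npos unfolding n_def ip_def by (simp add: sum_divide_distrib[symmetric])
    finally have "ip f1 f1 = 1" .
    moreover have "sum f1 V = sum f0 V / sqrt n" unfolding f1_def by (simp add: sum_divide_distrib)
    ultimately have "f1 \<in> K" unfolding K_def using f0(2) by (auto simp: f1_def)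
    then show ?thesis by blast
  qed
  have c1: "continuous_on UNIV (\<lambda>h::'a\<Rightarrow>real. \<Sum>y\<in>V. (if E v y then 1 else 0) * h y)" for v
    by (rule continuous_on_sum, rule continuous_on_mult[OF continuous_on_const cont])
  have c2: "continuous_on UNIV (\<lambda>h::'a\<Rightarrow>real. \<Sum>v\<in>V. h v * (\<Sum>y\<in>V. (if E v y then 1 else 0) * h y))"
    by (rule continuous_on_sum, rule continuous_on_mult[OF cont c1])
  have cQ0: "continuous_on UNIV (\<lambda>h::'a\<Rightarrow>real. \<sigma> * (\<Sum>v\<in>V. h v * (\<Sum>y\<in>V. (if E v y then 1 else 0) * h y)))"
    by (rule continuous_on_mult[OF continuous_on_const c2])
  have eqQ: "(\<lambda>h. \<sigma> * ip h (Ad h)) = (\<lambda>h. \<sigma> * (\<Sum>v\<in>V. h v * (\<Sum>y\<in>V. (if E v y then 1 else 0) * h y)))"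
    unfolding ip_def Ad_def by (intro ext arg_cong[where f="\<lambda>x. \<sigma> * x"] sum.cong refl arg_cong[where f="\<lambda>x. _ * x"]) auto
  have cQ: "continuous_on K (\<lambda>h. \<sigma> * ip h (Ad h))"
    unfolding eqQ by (rule continuous_on_subset[OF cQ0 subset_UNIV])
  obtain f where "f \<in> K" "\<forall>h\<in>K. \<sigma> * ip h (Ad h) \<le> \<sigma> * ip f (Ad f)"
    using continuous_attains_sup[OF compK neK cQ] by blast
  then show ?thesis unfolding K_def by blast
qed

end


context drgl
begin

lemma Ad_lin: "Ad (\<lambda>v. \<alpha> * f v + \<beta> * g v) x = \<alpha> * Ad f x + \<beta> * Ad g x"
  unfolding Ad_def sum_distrib_left sum.distrib[symmetric] by (intro sum.cong refl) auto

lemma Q_lin: "ip (\<lambda>v. \<alpha> * f v + \<beta> * g v) (Ad (\<lambda>v. \<alpha> * f v + \<beta> * g v))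
   = \<alpha>^2 * ip f (Ad f) + \<alpha> * \<beta> * (ip f (Ad g) + ip g (Ad f)) + \<beta>^2 * ip g (Ad g)"
  unfolding Ad_lin unfolding ip_def
  by (simp add: sum.distrib sum_distrib_left algebra_simps power2_eq_square)

lemma N_lin: "ip (\<lambda>v. \<alpha> * f v + \<beta> * g v) (\<lambda>v. \<alpha> * f v + \<beta> * g v)
   = \<alpha>^2 * ip f f + \<alpha> * \<beta> * (2 * ip f g) + \<beta>^2 * ip g g"
  unfolding ip_def
  by (simp add: sum.distrib sum_distrib_left algebra_simps power2_eq_square)

lemma extremal:
  fixes f0 :: "'a \<Rightarrow> real"
  assumes sig: "\<sigma> \<noteq> 0" and f0: "\<exists>v\<in>V. f0 v \<noteq> 0" "z \<longrightarrow> sum f0 V = 0"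
  shows "\<exists>\<mu> f. (\<exists>v\<in>V. f v \<noteq> 0) \<and> (z \<longrightarrow> sum f V = 0) \<and> (\<forall>v\<in>V. Ad f v = \<mu> * f v) \<and>
     (\<forall>h. (z \<longrightarrow> sum h V = 0) \<longrightarrow> \<sigma> * ip h (Ad h) \<le> \<sigma> * \<mu> * ip h h)"
proof -
  obtain f where f: "ip f f = 1" "z \<longrightarrow> sum f V = 0"
    and mx: "\<And>h. (\<forall>v. v \<notin> V \<longrightarrow> h v = 0) \<and> ip h h = 1 \<and> (z \<longrightarrow> sum h V = 0) \<Longrightarrow> \<sigma> * ip h (Ad h) \<le> \<sigma> * ip f (Ad f)"
    using exists_max[OF f0, of \<sigma>] by blast
  define \<mu> where "\<mu> = ip f (Ad f)"
  have ineq: "\<sigma> * ip h (Ad h) \<le> \<sigma> * \<mu> * ip h h" if Ph: "z \<longrightarrow> sum h V = 0" for h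
  proof (cases "ip h h = 0")
    case True
    then have "\<forall>v\<in>V. h v = 0" using ip_zero by blast
    then have "ip h (Ad h) = 0" unfolding ip_def by simp
    then show ?thesis using True by simp
  next
    case False
    define n where "n = ip h h"
    have npos: "n > 0" using False ip_nonneg[of h] n_def by simp
    define s where "s = sqrt n"
    have spos: "s > 0" using npos s_def by simp
    have ss: "s * s = n" using npos s_def by simp
    define h1 where "h1 = (\<lambda>v. if v \<in> V then h v / s else 0)"
    have "ip h1 h1 = (\<Sum>v\<in>V. h v * h v / n)" unfolding ip_def h1_def
      using ss by (intro sum.cong refl) simp
    also have "\<dots> = 1" using npos unfolding n_def ip_def by (simp add: sum_divide_distrib[symmetric])
    finally have n1: "ip h1 h1 = 1" .
    have sh1: "sum h1 V = sum h V / s" unfolding h1_def by (simp add: sum_divide_distrib)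
    have Ah1: "Ad h1 x = Ad h x / s" for x
      unfolding Ad_def h1_def sum_divide_distrib by (intro sum.cong refl) auto
    have "ip h1 (Ad h1) = (\<Sum>v\<in>V. h v * Ad h v / n)" unfolding ip_def Ah1
      by (intro sum.cong refl) (simp add: h1_def ss[symmetric])
    also have "\<dots> = ip h (Ad h) / n" unfolding ip_def by (simp add: sum_divide_distrib)
    finally have q1: "ip h1 (Ad h1) = ip h (Ad h) / n" .
    have "\<sigma> * ip h1 (Ad h1) \<le> \<sigma> * \<mu>"
      using mx[of h1] n1 sh1 Ph unfolding \<mu>_def h1_def by auto
    then have "\<sigma> * ip h (Ad h) / n \<le> \<sigma> * \<mu>" unfolding q1 by simp
    then show ?thesis using npos unfolding n_def by (simp add: divide_le_eq mult.assoc)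
  qed
  have eq: "ip f (Ad f) = \<mu> * ip f f" using f unfolding \<mu>_def by simp
  have st: "\<forall>v\<in>V. Ad f v = \<mu> * f v" by (rule stationary[OF sig ineq f(2) eq]) blast
  have "\<exists>v\<in>V. f v \<noteq> 0"
  proof (rule ccontr)
    assume "\<not> ?thesis"
    then have "ip f f = 0" unfolding ip_def by simp
    then show False using f by simp
  qed
  then show ?thesis using st f ineq by blast
qed

lemma Ad_nbrs: "Ad f w = sum f (nbrs V E w)"
  unfolding Ad_def Defs.nbrs_def using sum.inter_filter[OF finV, of f "\<lambda>y. E w y"] by simp

lemma const_eig:
  assumes ev: "\<forall>v\<in>V. Ad f v = real k * f v" and s0: "sum f V = 0"
  shows "\<forall>v\<in>V. f v = 0"
proof -
  define M where "M = Max (f ` V)"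
  have fin: "finite (f ` V)" using finV by simp
  have "M \<in> f ` V" unfolding M_def using fin Vne by (intro Max_in) auto
  then obtain v0 where v0: "v0 \<in> V" "f v0 = M" by auto
  have le: "f y \<le> M" if "y \<in> V" for y unfolding M_def using fin that by simp
  have step: "f y = M" if w: "w \<in> V" "f w = M" "E w y" for w y
  proof -
    have nb: "nbrs V E w \<subseteq> V" by (rule nbrs_sub)
    have "sum f (nbrs V E w) = real k * M" using ev w Ad_nbrs by simp
    also have "\<dots> = sum (\<lambda>_. M) (nbrs V E w)" using card_nbrs[OF w(1)] by simp
    finally have "sum (\<lambda>u. M - f u) (nbrs V E w) = 0" by (simp add: sum_subtractf)
    moreover have nn: "\<And>u. u \<in> nbrs V E w \<Longrightarrow> M - f u \<ge> 0" using le nb by auto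
    ultimately have "\<forall>u\<in>nbrs V E w. M - f u = 0" using sum_nonneg_eq_0_iff[OF fin_nbrs nn] by simp
    moreover have "y \<in> nbrs V E w" using w EV unfolding Defs.nbrs_def by auto
    ultimately show ?thesis by simp
  qed
  have "walk V E n v0 v \<Longrightarrow> f v = M" for n v
  proof (induction n arbitrary: v)
    case 0 then show ?case using v0 by simp
  next
    case (Suc n)
    then obtain w where "w \<in> V" "walk V E n v0 w" "E w v" using walk_snoc by blast
    then show ?case using Suc step by blast
  qed
  then have all: "\<forall>v\<in>V. f v = M" using conn v0 by blast
  then have "sum f V = real (card V) * M" by simp
  then have "M = 0" using s0 finV Vne by simp
  then show ?thesis using all by simp
qed

lemma second:
  fixes \<theta> :: "nat \<Rightarrow> real" and D :: nat
  assumes eig: "{t. adj_eigenvalue V E t} = \<theta> ` {0..D}"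
    and dec: "\<And>i j. i < j \<Longrightarrow> j \<le> D \<Longrightarrow> \<theta> j < \<theta> i"
    and th0: "\<theta> 0 = real k" and D1: "D \<ge> 1"
    and p: "\<exists>v\<in>V. p v \<noteq> 0" "sum p V = 0" "ip p (Ad p) \<ge> m * ip p p"
  shows "\<theta> 1 \<ge> m"
proof -
  obtain \<mu> f where f: "\<exists>v\<in>V. f v \<noteq> 0" "sum f V = 0" "\<forall>v\<in>V. Ad f v = \<mu> * f v"
    and ineq: "\<And>h. sum h V = 0 \<Longrightarrow> ip h (Ad h) \<le> \<mu> * ip h h"
    using extremal[of 1 p True] p by auto
  have "ip p p \<noteq> 0" using p(1) ip_zero by blast
  then have np: "ip p p > 0" using ip_nonneg[of p] by simp
  have "m * ip p p \<le> \<mu> * ip p p" using ineq[OF p(2)] p(3) by simp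
  then have mu: "m \<le> \<mu>" using np by simp
  have "adj_eigenvalue V E \<mu>" unfolding Defs.adj_eigenvalue_def using f(1,3) Ad_def by auto
  then have "\<mu> \<in> \<theta> ` {0..D}" using eig by blast
  then obtain j where j: "j \<le> D" "\<mu> = \<theta> j" by auto
  have "j \<noteq> 0"
  proof
    assume "j = 0"
    then have "\<forall>v\<in>V. Ad f v = real k * f v" using f j th0 by simp
    then have "\<forall>v\<in>V. f v = 0" using const_eig f(2) by blast
    then show False using f(1) by blast
  qed
  then have "\<theta> j \<le> \<theta> 1" using dec[of 1 j] j by (cases "j = 1") auto
  then show ?thesis using mu j by simp
qed

lemma two_vec:
  assumes "ip g (Ad g) \<ge> m * ip g g" "ip h (Ad h) \<ge> m * ip h h" "ip g h = 0" "ip g (Ad h) = 0"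
    "sum h V \<noteq> 0" "v0 \<in> V" "g v0 \<noteq> 0" "h v0 = 0"
  shows "\<exists>p. (\<exists>v\<in>V. p v \<noteq> 0) \<and> sum p V = 0 \<and> ip p (Ad p) \<ge> m * ip p p"
proof -
  define \<alpha> where "\<alpha> = sum h V"
  define \<beta> where "\<beta> = - sum g V"
  define p where "p = (\<lambda>v. \<alpha> * g v + \<beta> * h v)"
  have "p v0 \<noteq> 0" using assms unfolding p_def \<alpha>_def by simp
  moreover have "sum p V = 0"
  proof -
    have "sum p V = \<alpha> * sum g V + \<beta> * sum h V" unfolding p_def by (simp add: sum.distrib sum_distrib_left)
    then show ?thesis by (simp add: \<alpha>_def \<beta>_def mult.commute)
  qed
  moreover have "ip p (Ad p) \<ge> m * ip p p"
  proof -
    have hg: "ip h (Ad g) = 0" using assms(4) ip_Ad_sym ip_sym by metis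
    have "ip p (Ad p) = \<alpha>^2 * ip g (Ad g) + \<beta>^2 * ip h (Ad h)"
      unfolding p_def Q_lin using hg assms(4) by simp
    moreover have "ip p p = \<alpha>^2 * ip g g + \<beta>^2 * ip h h"
      unfolding p_def N_lin using assms(3) by simp
    moreover have "\<alpha>^2 * ip g (Ad g) \<ge> \<alpha>^2 * (m * ip g g)" using assms(1) by (simp add: mult_left_mono)
    moreover have "\<beta>^2 * ip h (Ad h) \<ge> \<beta>^2 * (m * ip h h)" using assms(2) by (simp add: mult_left_mono)
    ultimately show ?thesis by (simp add: algebra_simps)
  qed
  ultimately show ?thesis using assms(6) by blast
qed

end


context drgl
begin

lemma k_eq: "k = b 0" unfolding k_def ..

definition ind :: "'a set \<Rightarrow> 'a \<Rightarrow> real" where "ind S = (\<lambda>y. if y \<in> S then 1 else 0)"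

lemma Ad_ind: "Ad (ind S) v = real (card (nbrs V E v \<inter> S))"
proof -
  have "Ad (ind S) v = (\<Sum>y\<in>nbrs V E v. ind S y)" by (rule Ad_nbrs)
  also have "\<dots> = (\<Sum>y\<in>{y\<in>nbrs V E v. y \<in> S}. 1)"
    using sum.inter_filter[OF fin_nbrs[of v], of "\<lambda>_. 1::real" "\<lambda>y. y \<in> S"] by (simp add: ind_def)
  also have "{y\<in>nbrs V E v. y \<in> S} = nbrs V E v \<inter> S" by auto
  finally show ?thesis by simp
qed

lemma sum_ind: "S \<subseteq> V \<Longrightarrow> sum (ind S) V = real (card S)"
proof -
  assume S: "S \<subseteq> V"
  have "sum (ind S) V = (\<Sum>y\<in>{y\<in>V. y \<in> S}. 1)"
    using sum.inter_filter[OF finV, of "\<lambda>_. 1::real" "\<lambda>y. y \<in> S"] by (simp add: ind_def)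
  also have "{y\<in>V. y \<in> S} = S" using S by auto
  finally show ?thesis by simp
qed

lemma sphere_sub: "Defs.sphere V E i x \<subseteq> V" unfolding Defs.sphere_def by auto

lemma sphere0: "x \<in> V \<Longrightarrow> Defs.sphere V E 0 x = {x}"
  unfolding Defs.sphere_def using gdist_0 by auto

lemma sphere1: "x \<in> V \<Longrightarrow> Defs.sphere V E 1 x = nbrs V E x"
proof -
  assume x: "x \<in> V"
  have "y \<in> Defs.sphere V E 1 x \<longleftrightarrow> y \<in> nbrs V E x" for y
  proof
    assume "y \<in> Defs.sphere V E 1 x"
    then have y: "y \<in> V" "gdist V E x y = 1" unfolding Defs.sphere_def by auto
    then have "walk V E 1 x y" using gdist_walk x by metis
    then show "y \<in> nbrs V E x" unfolding Defs.nbrs_def using y by auto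
  next
    assume "y \<in> nbrs V E x"
    then show "y \<in> Defs.sphere V E 1 x" unfolding Defs.nbrs_def Defs.sphere_def using gdist_edge by auto
  qed
  then show ?thesis by blast
qed

lemma cn_up: "x \<in> V \<Longrightarrow> v \<in> V \<Longrightarrow> gdist V E x v = j \<Longrightarrow> card (nbrs V E v \<inter> Defs.sphere V E (j+1) x) = b j"
  using drg_cond by blast

lemma cn_down: "x \<in> V \<Longrightarrow> v \<in> V \<Longrightarrow> gdist V E x v = j \<Longrightarrow> j \<ge> 1 \<Longrightarrow> card (nbrs V E v \<inter> Defs.sphere V E (j-1) x) = c j"
proof -
  assume a: "x \<in> V" "v \<in> V" "gdist V E x v = j" "j \<ge> 1"
  have "card (nbrs V E v \<inter> (if j = 0 then {} else Defs.sphere V E (j - 1) x)) = c j"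
    using drg_cond[OF a(1,2,3)] by blast
  then show ?thesis using a(4) by simp
qed

lemma cn_far: assumes "x \<in> V" "v \<in> V" "gdist V E x v = j" "i + 2 \<le> j \<or> j + 2 \<le> i"
  shows "nbrs V E v \<inter> Defs.sphere V E i x = {}"
proof -
  have "gdist V E x z = i \<Longrightarrow> E v z \<Longrightarrow> False" for z
    using gdist_nb[OF assms(1), of v z] assms by auto
  then show ?thesis unfolding Defs.nbrs_def Defs.sphere_def by auto
qed

lemma c0: "c 0 = 0"
proof -
  obtain x where "x \<in> V" using Vne by auto
  then show ?thesis using drg_cond[of x x 0] gdist_0 by auto
qed

lemma c1: assumes "x \<in> V" "v \<in> V" "gdist V E x v = 1" shows "c 1 = 1"
proof -
  have "c 1 = card (nbrs V E v \<inter> Defs.sphere V E 0 x)" using cn_down[OF assms] by simp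
  also have "nbrs V E v \<inter> Defs.sphere V E 0 x = {x}"
    using sphere0[OF assms(1)] sphere1[OF assms(1)] assms(2,3) unfolding Defs.nbrs_def Defs.sphere_def
    by (auto intro: Esym)
  finally show ?thesis by simp
qed

definition gv :: "'a \<Rightarrow> real \<Rightarrow> 'a \<Rightarrow> real" where
  "gv x t = (\<lambda>y. 1 * ind (Defs.sphere V E 0 x) y + (t / real k) * ind (Defs.sphere V E 1 x) y)"

lemma gv_Ad: "Ad (gv x t) v = real (card (nbrs V E v \<inter> Defs.sphere V E 0 x)) + t / real k * real (card (nbrs V E v \<inter> Defs.sphere V E 1 x))"
  unfolding gv_def Ad_lin Ad_ind by simp

lemma gv_supp: "gv x t v \<noteq> 0 \<Longrightarrow> v \<in> V \<and> gdist V E x v \<le> 1"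
  unfolding gv_def ind_def Defs.sphere_def by (auto split: if_splits)

lemma gv_x: "x \<in> V \<Longrightarrow> gv x t x = 1"
proof -
  assume x: "x \<in> V"
  have "x \<in> Defs.sphere V E 0 x" using sphere0[OF x] by simp
  moreover have "x \<notin> Defs.sphere V E 1 x" using sphere1[OF x] Eirr unfolding Defs.nbrs_def by simp
  ultimately show ?thesis unfolding gv_def ind_def by simp
qed

lemma gv_eig:
  assumes x: "x \<in> V" and kp: "k > 0" and t: "t^2 = (real k - b 1 - c 1) * t + k"
    and v: "v \<in> V" "gdist V E x v \<le> 1"
  shows "Ad (gv x t) v = t * gv x t v"
proof (cases "gdist V E x v = 0")
  case True
  then have vx: "v = x" using gdist_0 x v by auto
  have gx0: "gdist V E x x = 0" using gdist_0 x by simp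
  have "real (card (nbrs V E x \<inter> Defs.sphere V E 0 x)) = real k - b 0 - c 0" using card_a[OF x x gx0] .
  then have z: "card (nbrs V E x \<inter> Defs.sphere V E 0 x) = 0" using c0 k_eq by simp
  have o: "card (nbrs V E x \<inter> Defs.sphere V E 1 x) = k" using cn_up[OF x x gx0] k_eq by simp
  show ?thesis unfolding gv_Ad vx z o using gv_x[OF x] kp by simp
next
  case False
  then have d1: "gdist V E x v = 1" using v by simp
  have cc1: "c 1 = 1" by (rule c1[OF x v(1) d1])
  have z: "card (nbrs V E v \<inter> Defs.sphere V E 0 x) = 1" using cn_down[OF x v(1) d1] cc1 by simp
  have o: "real (card (nbrs V E v \<inter> Defs.sphere V E 1 x)) = real k - b 1 - c 1" using card_a[OF x v(1) d1] .
  have g: "gv x t v = t / real k" unfolding gv_def ind_def Defs.sphere_def using d1 v gdist_0 x by auto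
  have "t * (t / real k) = (t^2) / real k" by (simp add: power2_eq_square)
  also have "\<dots> = 1 + t / real k * (real k - b 1 - c 1)" unfolding t using kp by (simp add: field_simps)
  finally show ?thesis unfolding gv_Ad z o g by simp
qed

lemma gv_far: assumes x: "x \<in> V" and v: "v \<in> V" "gdist V E x v \<ge> 3"
  shows "Ad (gv x t) v = 0"
proof -
  have "nbrs V E v \<inter> Defs.sphere V E 0 x = {}" "nbrs V E v \<inter> Defs.sphere V E 1 x = {}"
    using cn_far[OF x v(1) refl] v by auto
  then show ?thesis unfolding gv_Ad by simp
qed

lemma gv_two: assumes x: "x \<in> V" and v: "v \<in> V" "gdist V E x v = 2"
  shows "Ad (gv x t) v = t / real k * c 2" "gv x t v = 0" "c 2 \<ge> 1"
proof -
  have "nbrs V E v \<inter> Defs.sphere V E 0 x = {}" using cn_far[OF x v(1) v(2)] by auto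
  moreover have "card (nbrs V E v \<inter> Defs.sphere V E 1 x) = c 2" using cn_down[OF x v] by simp
  ultimately show "Ad (gv x t) v = t / real k * c 2" unfolding gv_Ad by simp
  show "gv x t v = 0" using gv_supp v by fastforce
  obtain z where z: "z \<in> V" "E z v" "gdist V E x z = 1" using gdist_pred[OF x v(1)] v(2)
    by (metis numeral_2_eq_2 One_nat_def)
  then have "z \<in> nbrs V E v \<inter> Defs.sphere V E 1 x" unfolding Defs.nbrs_def Defs.sphere_def by (auto intro: Esym)
  then have "card (nbrs V E v \<inter> Defs.sphere V E 1 x) \<noteq> 0" using fin_nbrs by auto
  then show "c 2 \<ge> 1" using cn_down[OF x v] by simp
qed

lemma gv_Q: assumes x: "x \<in> V" and kp: "k > 0" and t: "t^2 = (real k - b 1 - c 1) * t + k"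
  shows "ip (gv x t) (Ad (gv x t)) = t * ip (gv x t) (gv x t)"
proof -
  have "ip (gv x t) (Ad (gv x t)) = (\<Sum>v\<in>V. gv x t v * (t * gv x t v))"
    unfolding ip_def
  proof (intro sum.cong refl)
    fix v assume v: "v \<in> V"
    show "gv x t v * Ad (gv x t) v = gv x t v * (t * gv x t v)"
    proof (cases "gv x t v = 0")
      case False
      then have "gdist V E x v \<le> 1" using gv_supp by blast
      then show ?thesis using gv_eig[OF x kp t v] by simp
    qed simp
  qed
  then show ?thesis unfolding ip_def by (simp add: sum_distrib_left algebra_simps)
qed

lemma gv_N: "x \<in> V \<Longrightarrow> ip (gv x t) (gv x t) > 0"
proof -
  assume x: "x \<in> V"
  have "ip (gv x t) (gv x t) \<noteq> 0" using ip_zero[of "gv x t" x] gv_x[OF x] x by auto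
  then show ?thesis using ip_nonneg[of "gv x t"] by simp
qed

lemma gv_sum: assumes x: "x \<in> V" and kp: "k > 0" shows "sum (gv x t) V = 1 + t"
proof -
  have "sum (gv x t) V = 1 * sum (ind (Defs.sphere V E 0 x)) V + t / real k * sum (ind (Defs.sphere V E 1 x)) V"
    unfolding gv_def by (simp add: sum.distrib sum_distrib_left)
  also have "\<dots> = 1 + t / real k * real k"
    using sum_ind[OF sphere_sub, of 0 x] sum_ind[OF sphere_sub, of 1 x] sphere0[OF x] sphere1[OF x] card_nbrs[OF x] by simp
  finally show ?thesis using kp by simp
qed

end




lemma roots:
  fixes a1 kk :: real
  assumes kp: "kk > 0"
  shows "((a1 + sqrt (a1^2 + 4*kk))/2)^2 = a1 * ((a1 + sqrt (a1^2 + 4*kk))/2) + kk"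
    "((a1 - sqrt (a1^2 + 4*kk))/2)^2 = a1 * ((a1 - sqrt (a1^2 + 4*kk))/2) + kk"
    "(a1 - sqrt (a1^2 + 4*kk))/2 < 0"
    "(a1 + sqrt (a1^2 + 4*kk))/2 > 0"
proof -
  define d where "d = sqrt (a1^2 + 4*kk)"
  have dd: "d^2 = a1^2 + 4*kk" unfolding d_def using kp by (simp add: add_nonneg_nonneg)
  have "\<bar>a1\<bar> = sqrt (a1^2)" by simp
  also have "\<dots> < d" unfolding d_def using kp by (intro real_sqrt_less_mono) simp
  finally have ad: "\<bar>a1\<bar> < d" .
  show "((a1 + sqrt (a1^2 + 4*kk))/2)^2 = a1 * ((a1 + sqrt (a1^2 + 4*kk))/2) + kk"
    unfolding d_def[symmetric] using dd by (simp add: power2_eq_square field_simps)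
  show "((a1 - sqrt (a1^2 + 4*kk))/2)^2 = a1 * ((a1 - sqrt (a1^2 + 4*kk))/2) + kk"
    unfolding d_def[symmetric] using dd by (simp add: power2_eq_square field_simps)
  show "(a1 - sqrt (a1^2 + 4*kk))/2 < 0" unfolding d_def[symmetric] using ad by (simp add: abs_less_iff)
  show "(a1 + sqrt (a1^2 + 4*kk))/2 > 0" unfolding d_def[symmetric] using ad by (simp add: abs_less_iff)
qed

context drgl
begin

lemma eig_index:
  fixes \<theta> :: "nat \<Rightarrow> real" and D :: nat
  assumes eig: "{t. adj_eigenvalue V E t} = \<theta> ` {0..D}"
    and f: "\<exists>v\<in>V. f v \<noteq> 0" "\<forall>v\<in>V. Ad f v = \<mu> * f v"
  shows "\<exists>j\<le>D. \<mu> = \<theta> j"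
proof -
  have "adj_eigenvalue V E \<mu>" unfolding Defs.adj_eigenvalue_def using f Ad_def by auto
  then have "\<mu> \<in> \<theta> ` {0..D}" using eig by blast
  then show ?thesis by auto
qed

lemma part_i:
  fixes \<theta> :: "nat \<Rightarrow> real" and D :: nat
  assumes eig: "{t. adj_eigenvalue V E t} = \<theta> ` {0..D}"
    and dec: "\<And>i j. i < j \<Longrightarrow> j \<le> D \<Longrightarrow> \<theta> j < \<theta> i"
    and Dd: "D = diameter V E" and kp: "k > 0" and D2: "D \<ge> 2"
  shows "\<theta> D < ((real k - b 1 - c 1) - sqrt ((real k - b 1 - c 1)^2 + 4 * real k)) / 2"
proof -
  define s where "s = ((real k - b 1 - c 1) - sqrt ((real k - b 1 - c 1)^2 + 4 * real k)) / 2"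
  have st: "s^2 = (real k - b 1 - c 1) * s + k" unfolding s_def using roots(2) kp by simp
  have sneg: "s < 0" unfolding s_def using roots(3) kp by simp
  obtain x w where x: "x \<in> V" and w: "w \<in> V" "gdist V E x w = 2"
    using exists_dist[of 2] D2 Dd by auto
  define g where "g = gv x s"
  have gx1: "g x = 1" unfolding g_def by (rule gv_x[OF x])
  have gx: "\<exists>v\<in>V. g v \<noteq> 0" using gx1 x by (intro bexI[of _ x]) auto
  obtain \<mu> f where f: "\<exists>v\<in>V. f v \<noteq> 0" "\<forall>v\<in>V. Ad f v = \<mu> * f v"
    and ineq: "\<And>h. (False \<longrightarrow> sum h V = 0) \<Longrightarrow> (-1) * ip h (Ad h) \<le> (-1) * \<mu> * ip h h"
    using extremal[of "-1" g False] gx by auto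
  obtain j where j: "j \<le> D" "\<mu> = \<theta> j" using eig_index[OF eig f] by blast
  have tD: "\<theta> D \<le> \<mu>" using j dec[of j D] by (cases "j = D") auto
  show ?thesis
  proof (rule ccontr)
    assume "\<not> ?thesis"
    then have sD: "s \<le> \<theta> D" unfolding s_def by simp
    have Qg: "ip g (Ad g) = s * ip g g" unfolding g_def by (rule gv_Q[OF x kp st])
    have Ng: "ip g g > 0" unfolding g_def by (rule gv_N[OF x])
    have "\<mu> * ip g g \<le> s * ip g g" using ineq[of g] Qg by simp
    then have "\<mu> \<le> s" using Ng by simp
    then have mus: "\<mu> = s" using sD tD by simp
    have eq: "ip g (Ad g) = \<mu> * ip g g" using Qg mus by simp
    have "\<forall>v\<in>V. Ad g v = \<mu> * g v"
      by (rule stationary[of "-1" False \<mu> g]) (use ineq eq in auto)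
    then have "Ad g w = \<mu> * g w" using w by blast
    moreover have "Ad g w = s / real k * c 2" "g w = 0" "c 2 \<ge> 1"
      using gv_two(1)[OF x w, of s] gv_two(2)[OF x w, of s] gv_two(3)[OF x w] unfolding g_def by auto
    ultimately have "s / real k * c 2 = 0" by simp
    then show False using sneg kp \<open>c 2 \<ge> 1\<close> by simp
  qed
qed

lemma part_ii:
  fixes \<theta> :: "nat \<Rightarrow> real" and D :: nat
  assumes eig: "{t. adj_eigenvalue V E t} = \<theta> ` {0..D}"
    and dec: "\<And>i j. i < j \<Longrightarrow> j \<le> D \<Longrightarrow> \<theta> j < \<theta> i"
    and th0: "\<theta> 0 = real k"
    and Dd: "D = diameter V E" and kp: "k > 0" and D3: "D \<ge> 3"
  shows "\<theta> 1 \<ge> min (((real k - b 1 - c 1) + sqrt ((real k - b 1 - c 1)^2 + 4 * real k)) / 2) (real k - b 3 - c 3)"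
proof -
  define r where "r = ((real k - b 1 - c 1) + sqrt ((real k - b 1 - c 1)^2 + 4 * real k)) / 2"
  define a3 where "a3 = real k - b 3 - c 3"
  define m where "m = min r a3"
  have rt: "r^2 = (real k - b 1 - c 1) * r + k" unfolding r_def using roots(1) kp by simp
  obtain x w where x: "x \<in> V" and w: "w \<in> V" "gdist V E x w = 3"
    using exists_dist[of 3] D3 Dd by auto
  define S where "S = Defs.sphere V E 3 x"
  define g where "g = gv x r"
  define h where "h = ind S"
  have g1: "ip g (Ad g) \<ge> m * ip g g"
  proof -
    have "ip g (Ad g) = r * ip g g" unfolding g_def by (rule gv_Q[OF x kp rt])
    moreover have "m * ip g g \<le> r * ip g g" using ip_nonneg[of g] unfolding m_def
      by (intro mult_right_mono) auto
    ultimately show ?thesis by simp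
  qed
  have hQ: "ip h (Ad h) = a3 * ip h h"
  proof -
    have "ip h (Ad h) = (\<Sum>v\<in>V. h v * (a3 * h v))" unfolding ip_def
    proof (intro sum.cong refl)
      fix v assume v: "v \<in> V"
      show "h v * Ad h v = h v * (a3 * h v)"
      proof (cases "v \<in> S")
        case True
        then have d3: "gdist V E x v = 3" unfolding S_def Defs.sphere_def by auto
        have "Ad h v = a3" unfolding h_def Ad_ind S_def a3_def using card_a[OF x v d3] by simp
        then show ?thesis using True unfolding h_def ind_def by simp
      qed (simp add: h_def ind_def)
    qed
    then show ?thesis unfolding ip_def by (simp add: sum_distrib_left algebra_simps)
  qed
  have h1: "ip h (Ad h) \<ge> m * ip h h"
  proof -
    have "m * ip h h \<le> a3 * ip h h" using ip_nonneg[of h] unfolding m_def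
      by (intro mult_right_mono) auto
    then show ?thesis using hQ by simp
  qed
  have gsupp: "g v \<noteq> 0 \<Longrightarrow> v \<in> V \<and> gdist V E x v \<le> 1" for v unfolding g_def by (rule gv_supp)
  have gh: "ip g h = 0" unfolding ip_def
  proof (intro sum.neutral ballI)
    fix v assume v: "v \<in> V"
    show "g v * h v = 0"
    proof (cases "g v = 0")
      case False
      then have "gdist V E x v \<le> 1" using gsupp by blast
      then have "v \<notin> S" unfolding S_def Defs.sphere_def by auto
      then show ?thesis unfolding h_def ind_def by simp
    qed simp
  qed
  have gAh: "ip g (Ad h) = 0" unfolding ip_def
  proof (intro sum.neutral ballI)
    fix v assume v: "v \<in> V"
    show "g v * Ad h v = 0"
    proof (cases "g v = 0")
      case False
      then have "gdist V E x v \<le> 1" using gsupp by blast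
      then have "nbrs V E v \<inter> S = {}" unfolding S_def using cn_far[OF x v refl, of 3] by simp
      then show ?thesis unfolding h_def Ad_ind by simp
    qed simp
  qed
  have hs: "sum h V \<noteq> 0"
  proof -
    have "sum h V = real (card S)" unfolding h_def S_def by (rule sum_ind[OF sphere_sub])
    moreover have "w \<in> S" unfolding S_def Defs.sphere_def using w by simp
    moreover have "finite S" unfolding S_def using finV sphere_sub finite_subset by blast
    ultimately show ?thesis by auto
  qed
  have gx1: "g x = 1" unfolding g_def by (rule gv_x[OF x])
  then have gx: "g x \<noteq> 0" by simp
  have hx: "h x = 0"
  proof -
    have "gdist V E x x = 0" using gdist_0 x by simp
    then have "x \<notin> S" unfolding S_def Defs.sphere_def by simp
    then show ?thesis unfolding h_def ind_def by simp
  qed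
  obtain p where "\<exists>v\<in>V. p v \<noteq> 0" "sum p V = 0" "ip p (Ad p) \<ge> m * ip p p"
    using two_vec[OF g1 h1 gh gAh hs x gx hx] by blast
  then have "\<theta> 1 \<ge> m" using second[OF eig dec th0] D3 by simp
  then show ?thesis unfolding m_def r_def a3_def .
qed

lemma part_iii:
  fixes \<theta> :: "nat \<Rightarrow> real" and D :: nat
  assumes eig: "{t. adj_eigenvalue V E t} = \<theta> ` {0..D}"
    and dec: "\<And>i j. i < j \<Longrightarrow> j \<le> D \<Longrightarrow> \<theta> j < \<theta> i"
    and th0: "\<theta> 0 = real k"
    and Dd: "D = diameter V E" and kp: "k > 0" and D4: "D \<ge> 4"
  shows "\<theta> 1 \<ge> ((real k - b 1 - c 1) + sqrt ((real k - b 1 - c 1)^2 + 4 * real k)) / 2"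
proof -
  define r where "r = ((real k - b 1 - c 1) + sqrt ((real k - b 1 - c 1)^2 + 4 * real k)) / 2"
  have rt: "r^2 = (real k - b 1 - c 1) * r + k" unfolding r_def using roots(1) kp by simp
  have rpos: "r > 0" unfolding r_def using roots(4) kp by simp
  obtain x y where x: "x \<in> V" and y: "y \<in> V" "gdist V E x y = 4"
    using exists_dist[of 4] D4 Dd by auto
  define g where "g = gv x r"
  define h where "h = gv y r"
  have g1: "ip g (Ad g) \<ge> r * ip g g" unfolding g_def using gv_Q[OF x kp rt] by simp
  have h1: "ip h (Ad h) \<ge> r * ip h h" unfolding h_def using gv_Q[OF y(1) kp rt] by simp
  have far: "gdist V E y v \<ge> 3" if v: "v \<in> V" "gdist V E x v \<le> 1" for v
  proof -
    have "gdist V E x y \<le> gdist V E x v + gdist V E v y" by (rule gdist_tri[OF x v(1) y(1)])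
    moreover have "gdist V E v y = gdist V E y v" using gdist_sym v(1) y(1) by simp
    ultimately show ?thesis using v y by simp
  qed
  have gsupp: "g v \<noteq> 0 \<Longrightarrow> v \<in> V \<and> gdist V E x v \<le> 1" for v unfolding g_def by (rule gv_supp)
  have hsupp: "h v \<noteq> 0 \<Longrightarrow> v \<in> V \<and> gdist V E y v \<le> 1" for v unfolding h_def by (rule gv_supp)
  have gh: "ip g h = 0" unfolding ip_def
  proof (intro sum.neutral ballI)
    fix v assume v: "v \<in> V"
    show "g v * h v = 0"
    proof (cases "g v = 0")
      case False
      then have "gdist V E y v \<ge> 3" using gsupp far by blast
      then have "h v = 0" using hsupp by fastforce
      then show ?thesis by simp
    qed simp
  qed
  have gAh: "ip g (Ad h) = 0" unfolding ip_def
  proof (intro sum.neutral ballI)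
    fix v assume v: "v \<in> V"
    show "g v * Ad h v = 0"
    proof (cases "g v = 0")
      case False
      then have "gdist V E y v \<ge> 3" using gsupp far by blast
      then have "Ad h v = 0" unfolding h_def using gv_far[OF y(1) v] by simp
      then show ?thesis by simp
    qed simp
  qed
  have hs: "sum h V \<noteq> 0" unfolding h_def using gv_sum[OF y(1) kp] rpos by simp
  have gx1: "g x = 1" unfolding g_def by (rule gv_x[OF x])
  then have gx: "g x \<noteq> 0" by simp
  have hx: "h x = 0"
  proof -
    have "gdist V E y x = 4" using gdist_sym x y by simp
    then show ?thesis using hsupp by fastforce
  qed
  obtain p where "\<exists>v\<in>V. p v \<noteq> 0" "sum p V = 0" "ip p (Ad p) \<ge> r * ip p p"
    using two_vec[OF g1 h1 gh gAh hs x gx hx] by blast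
  then have "\<theta> 1 \<ge> r" using second[OF eig dec th0] D4 by simp
  then show ?thesis unfolding r_def .
qed

end

theorem theorem3p1:
  fixes V :: "'a set" and E :: "'a \<Rightarrow> 'a \<Rightarrow> bool"
    and b c :: "nat \<Rightarrow> nat" and \<theta> :: "nat \<Rightarrow> real" and k D :: nat and a :: "nat \<Rightarrow> real"
  assumes drg: "distance_regular_with V E b c"
    and k_def: "k = b 0"
    and a_def: "\<And>i. a i = real k - real (b i) - real (c i)"
    and D_def: "D = diameter V E"
    and k3: "k \<ge> 3"
    and D3: "D \<ge> 3"
    and eig: "{t. adj_eigenvalue V E t} = \<theta> ` {0..D}"
    and dec: "\<And>i j. i < j \<Longrightarrow> j \<le> D \<Longrightarrow> \<theta> j < \<theta> i"
    and th0: "\<theta> 0 = real k"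
  shows "\<theta> D < (a 1 - sqrt ((a 1)\<^sup>2 + 4 * real k)) / 2
     \<and> \<theta> 1 \<ge> min ((a 1 + sqrt ((a 1)\<^sup>2 + 4 * real k)) / 2) (a 3)
     \<and> (D \<ge> 4 \<longrightarrow> \<theta> 1 \<ge> (a 1 + sqrt ((a 1)\<^sup>2 + 4 * real k)) / 2)"
proof -
  interpret G: drgl V E b c by (rule drgl.intro[OF drg])
  have kk: "G.k = k" using G.k_eq k_def by simp
  have kp: "G.k > 0" using kk k3 by simp
  have th0': "\<theta> 0 = real G.k" using th0 kk by simp
  have a1: "a 1 = real G.k - b 1 - c 1" using a_def kk by simp
  have a3: "a 3 = real G.k - b 3 - c 3" using a_def kk by simp
  have i: "\<theta> D < (a 1 - sqrt ((a 1)\<^sup>2 + 4 * real k)) / 2"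
    using G.part_i[OF eig dec D_def kp] D3 unfolding a1 kk by simp
  have ii: "\<theta> 1 \<ge> min ((a 1 + sqrt ((a 1)\<^sup>2 + 4 * real k)) / 2) (a 3)"
    using G.part_ii[OF eig dec th0' D_def kp D3] unfolding a1 a3 kk by simp
  have iii: "D \<ge> 4 \<longrightarrow> \<theta> 1 \<ge> (a 1 + sqrt ((a 1)\<^sup>2 + 4 * real k)) / 2"
    using G.part_iii[OF eig dec th0' D_def kp] unfolding a1 kk by simp
  show ?thesis using i ii iii by blast
qed


end
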